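(* Let $I=\{i_1,\dots,i_r\}\subset[n-1]$ with $0=i_0<i_1<\dots<i_r<i_{r+1}=n$, let $h\in\mathcal H_{I,n}$, and let $1\le k\le r+1$. Put $I'=I\cup\{i_{k-1}+1,\dots,i_k-1\}$ and let $h'\in\mathcal H_{I',n}$ be defined by $h'|_{I\cup\{n\}}=h$ and $h'(i)=h(i_k)$ for $i_{k-1}<i\le i_k$. Then $\mathsf{csf}_q(h')=[i_k-i_{k-1}]_q!\,\mathsf{csf}_q(h)$.
   Context: For $I\subset[n-1]$, $\mathcal H_{I,n}$ is the set of maps $h:I\cup\{n\}\to I\cup\{n\}$ with $h(i)\ge i$ and $h(i)\le h(j)$ for $i<j$ in $I$. For $h\in\mathcal H_{I,n}$ with $I=\{i_1<\dots<i_r\}$, $i_0=0$, $i_{r+1}=n$, the weighted graph of $h$ has vertex set $I\cup\{n\}$, edges $(i,j)$ for $i<j\le h(i)$, and weights $w_h(i_k)=i_k-i_{k-1}$. A proper coloring assigns to each vertex $i$ a subset $\gamma(i)\subset\mathbb N$ with $|\gamma(i)|=w_h(i)$ and $\gamma(i)\cap\gamma(j)=\emptyset$ for every edge $(i,j)$. $\mathsf{csf}_q(h)=\sum_{\gamma\text{ proper}}q^{\mathsf{asc}_h(\gamma)}x_\gamma$ with $x_\gamma=\prod_i\prod_{a\in\gamma(i)}x_a$ and $\mathsf{asc}_h(\gamma)=\sum_{(i,j)\text{ edge}}|\{(a,b)\in\gamma(i)\times\gamma(j):a<b\}|$. $[m]_q!=\prod_{s=1}^m(1+q+\dots+q^{s-1})$.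 *)

theory Defs
  imports Main "HOL-Computational_Algebra.Polynomial"
begin

definition idx :: "nat set \<Rightarrow> nat \<Rightarrow> nat \<Rightarrow> nat" where
  "idx I n j = (if j = 0 then 0
               else if j \<le> card I then sorted_list_of_set I ! (j - 1)
               else n)"

definition Hmaps :: "nat set \<Rightarrow> nat \<Rightarrow> (nat \<Rightarrow> nat) set" where
  "Hmaps I n = {h. (\<forall>i \<in> I \<union> {n}. h i \<in> I \<union> {n} \<and> i \<le> h i)
                  \<and> (\<forall>i \<in> I. \<forall>j \<in> I. i < j \<longrightarrow> h i \<le> h j)}"

definition wt :: "nat set \<Rightarrow> nat \<Rightarrow> nat" where
  "wt I v = v - Max ({0} \<union> {i \<in> I. i < v})"

definition hedge :: "nat set \<Rightarrow> nat \<Rightarrow> (nat \<Rightarrow> nat) \<Rightarrow> nat \<Rightarrow> nat \<Rightarrow> bool" where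
  "hedge I n h i j \<longleftrightarrow> i \<in> I \<union> {n} \<and> j \<in> I \<union> {n} \<and> i < j \<and> j \<le> h i"

definition proper_colorings :: "nat set \<Rightarrow> nat \<Rightarrow> (nat \<Rightarrow> nat) \<Rightarrow> (nat \<Rightarrow> nat set) set" where
  "proper_colorings I n h = {\<gamma>.
     (\<forall>v. v \<notin> I \<union> {n} \<longrightarrow> \<gamma> v = {}) \<and>
     (\<forall>v \<in> I \<union> {n}. finite (\<gamma> v) \<and> card (\<gamma> v) = wt I v \<and> 0 \<notin> \<gamma> v) \<and>
     (\<forall>i j. hedge I n h i j \<longrightarrow> \<gamma> i \<inter> \<gamma> j = {})}"

text \<open>Exponent vector of the monomial x_gamma.\<close>
definition xexp :: "nat set \<Rightarrow> nat \<Rightarrow> (nat \<Rightarrow> nat set) \<Rightarrow> nat \<Rightarrow> nat" where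
  "xexp I n \<gamma> a = card {v \<in> I \<union> {n}. a \<in> \<gamma> v}"

definition asc :: "nat set \<Rightarrow> nat \<Rightarrow> (nat \<Rightarrow> nat) \<Rightarrow> (nat \<Rightarrow> nat set) \<Rightarrow> nat" where
  "asc I n h \<gamma> = (\<Sum>(i,j) \<in> {(i,j). hedge I n h i j}.
                     card {(a,b). a \<in> \<gamma> i \<and> b \<in> \<gamma> j \<and> a < b})"

text \<open>csf_q(h), represented by its coefficient map: monomial exponent vector \<mapsto>
  polynomial in q.\<close>
definition csf :: "nat set \<Rightarrow> nat \<Rightarrow> (nat \<Rightarrow> nat) \<Rightarrow> (nat \<Rightarrow> nat) \<Rightarrow> int poly" where
  "csf I n h \<alpha> = (\<Sum>\<gamma> \<in> {\<gamma> \<in> proper_colorings I n h. xexp I n \<gamma> = \<alpha>}.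
                     monom 1 (asc I n h \<gamma>))"

definition qint :: "nat \<Rightarrow> int poly" where
  "qint s = (\<Sum>t<s. monom 1 t)"

definition qfact :: "nat \<Rightarrow> int poly" where
  "qfact m = (\<Prod>s=1..m. qint s)"

end

theory Submission
  imports Defs
begin


definition Bij :: "nat set \<Rightarrow> nat set \<Rightarrow> (nat \<Rightarrow> nat) set" where
  "Bij K S = {f. bij_betw f K S \<and> (\<forall>v. v \<notin> K \<longrightarrow> f v = 0)}"

definition nin :: "(nat \<Rightarrow> nat) \<Rightarrow> nat set \<Rightarrow> nat" where
  "nin f K = card {(u,v). u \<in> K \<and> v \<in> K \<and> u < v \<and> f u < f v}"

lemma qfact_Suc: "qfact (Suc m) = qint (Suc m) * qfact m"
  unfolding qfact_def by (simp add: prod.nat_ivl_Suc')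

lemma qint_Suc: "qint (Suc m) = qint m + monom 1 m"
  unfolding qint_def by simp

lemma finite_Bij: "finite K \<Longrightarrow> finite S \<Longrightarrow> finite (Bij K S)"
proof -
  assume "finite K" "finite S"
  then have "finite {f. \<forall>x. (x \<in> K \<longrightarrow> f x \<in> S) \<and> (x \<notin> K \<longrightarrow> f x = 0)}"
    by (rule finite_set_of_finite_funs)
  moreover have "Bij K S \<subseteq> {f. \<forall>x. (x \<in> K \<longrightarrow> f x \<in> S) \<and> (x \<notin> K \<longrightarrow> f x = 0)}"
    unfolding Bij_def bij_betw_def by auto
  ultimately show ?thesis by (rule finite_subset[rotated])
qed

lemma rank_sum: "finite (S::nat set) \<Longrightarrow> (\<Sum>s\<in>S. monom (1::int) (card {t\<in>S. t<s})) = qint (card S)"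
proof (induction "card S" arbitrary: S)
  case 0
  then show ?case by (simp add: qint_def)
next
  case (Suc m)
  define M where "M = Max S"
  have ne: "S \<noteq> {}" using Suc by auto
  have M: "M \<in> S" "\<And>s. s \<in> S \<Longrightarrow> s \<le> M" using Suc ne M_def by auto
  define S0 where "S0 = S - {M}"
  have S: "S = insert M S0" "M \<notin> S0" "finite S0" using M S0_def Suc by auto
  have cS0: "card S0 = m" using Suc S by (metis card_insert_disjoint diff_Suc_1)
  have "(\<Sum>s\<in>S. monom (1::int) (card {t\<in>S. t<s})) =
        monom 1 (card {t\<in>S. t<M}) + (\<Sum>s\<in>S0. monom (1::int) (card {t\<in>S. t<s}))"
    using S by simp
  also have "{t\<in>S. t<M} = S0"
  proof -
    have "\<forall>t\<in>S0. t < M" using S M by (metis insertCI le_neq_implies_less)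
    then show ?thesis using S by auto
  qed
  also have "(\<Sum>s\<in>S0. monom (1::int) (card {t\<in>S. t<s})) = (\<Sum>s\<in>S0. monom (1::int) (card {t\<in>S0. t<s}))"
  proof (rule sum.cong)
    fix s assume "s \<in> S0"
    then have "s \<in> S" using S(1) by simp
    then have "s \<le> M" by (rule M(2))
    then have "{t\<in>S. t<s} = {t\<in>S0. t<s}" using S by auto
    then show "monom (1::int) (card {t\<in>S. t<s}) = monom (1::int) (card {t\<in>S0. t<s})" by simp
  qed simp
  also have "\<dots> = qint m" using Suc.hyps(1)[of S0] S cS0 by simp
  finally show ?case using cS0 Suc.hyps(2)[symmetric] qint_Suc by (simp add: add.commute)
qed

lemma nin_split:
  assumes g: "g \<in> Bij K0 (S - {s})" and w: "\<forall>u\<in>K0. u < w" and s: "s \<in> S"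
    and fin: "finite K0"
  shows "nin (g(w:=s)) (insert w K0) = nin g K0 + card {t\<in>S. t<s}"
proof -
  have wK: "w \<notin> K0" using w by auto
  have gb: "bij_betw g K0 (S - {s})" using g unfolding Bij_def by auto
  let ?A = "{(u,v). u \<in> K0 \<and> v \<in> K0 \<and> u < v \<and> g u < g v}"
  let ?B = "(\<lambda>u. (u,w)) ` {u\<in>K0. g u < s}"
  have eq: "{(u,v). u \<in> insert w K0 \<and> v \<in> insert w K0 \<and> u < v \<and> (g(w:=s)) u < (g(w:=s)) v}
      = ?A \<union> ?B"
    using w wK by auto
  have fA: "finite ?A"
    by (rule finite_subset[of _ "K0 \<times> K0"]) (auto simp: fin)
  have fB: "finite ?B" using fin by simp
  have dis: "?A \<inter> ?B = {}" using wK by auto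
  have "card ?B = card {u\<in>K0. g u < s}" by (rule card_image) (simp add: inj_on_def)
  also have "\<dots> = card (g ` {u\<in>K0. g u < s})"
    using gb by (intro card_image[symmetric]) (auto simp: bij_betw_def inj_on_def)
  also have "g ` {u\<in>K0. g u < s} = {t\<in>S. t<s}"
  proof -
    have "g ` K0 = S - {s}" using gb by (simp add: bij_betw_def)
    then show ?thesis by auto
  qed
  finally have cB: "card ?B = card {t\<in>S. t<s}" .
  show ?thesis unfolding nin_def eq using card_Un_disjoint[OF fA fB dis] cB by simp
qed

lemma Bij_upd:
  assumes "w \<notin> K0" "s \<in> S"
  shows "bij_betw (\<lambda>g. g(w:=s)) (Bij K0 (S - {s})) {f \<in> Bij (insert w K0) S. f w = s}"
proof (rule bij_betw_byWitness[where f' = "\<lambda>f. f(w:=0)"])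
  show "\<forall>g\<in>Bij K0 (S - {s}). (g(w := s))(w := 0) = g"
  proof
    fix g assume "g \<in> Bij K0 (S - {s})"
    then have "g w = 0" using assms by (auto simp: Bij_def)
    then show "(g(w := s))(w := 0) = g" by (simp add: fun_upd_idem)
  qed
  show "\<forall>f\<in>{f \<in> Bij (insert w K0) S. f w = s}. (f(w := 0))(w := s) = f"
    by auto
  show "(\<lambda>g. g(w := s)) ` Bij K0 (S - {s}) \<subseteq> {f \<in> Bij (insert w K0) S. f w = s}"
  proof (rule image_subsetI)
    fix g assume g: "g \<in> Bij K0 (S - {s})"
    then have "bij_betw g K0 (S - {s})" by (simp add: Bij_def)
    moreover have "bij_betw (g(w:=s)) K0 (S - {s}) = bij_betw g K0 (S - {s})"
      by (rule bij_betw_cong) (use assms in auto)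
    ultimately have "bij_betw (g(w:=s)) K0 (S - {s})" by simp
    then have "bij_betw (g(w:=s)) (K0 \<union> {w}) ((S - {s}) \<union> {(g(w:=s)) w})"
      using assms by (intro notIn_Un_bij_betw) auto
    then have "bij_betw (g(w:=s)) (insert w K0) S" using assms
      by (simp add: insert_absorb)
    then show "g(w := s) \<in> {f \<in> Bij (insert w K0) S. f w = s}"
      using g unfolding Bij_def by auto
  qed
  show "(\<lambda>f. f(w := 0)) ` {f \<in> Bij (insert w K0) S. f w = s} \<subseteq> Bij K0 (S - {s})"
  proof (rule image_subsetI)
    fix f assume "f \<in> {f \<in> Bij (insert w K0) S. f w = s}"
    then have f: "f \<in> Bij (insert w K0) S" "f w = s" by auto
    then have b: "bij_betw f (insert w K0) S" by (simp add: Bij_def)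
    have "bij_betw f (insert w K0 - {w}) (S - {s})"
      by (rule bij_betw_DiffI[OF b bij_betw_singletonI[of f w s, OF f(2)]]) (use assms in auto)
    moreover have "insert w K0 - {w} = K0" using assms by auto
    ultimately have "bij_betw f K0 (S - {s})" by simp
    moreover have "bij_betw (f(w:=0)) K0 (S - {s}) = bij_betw f K0 (S - {s})"
      by (rule bij_betw_cong) (use assms in auto)
    ultimately have "bij_betw (f(w:=0)) K0 (S - {s})" by simp
    then show "f(w := 0) \<in> Bij K0 (S - {s})" using f unfolding Bij_def by auto
  qed
qed

lemma inv_gen:
  "finite K \<Longrightarrow> finite S \<Longrightarrow> card K = card S \<Longrightarrow>
   (\<Sum>f\<in>Bij K S. monom (1::int) (nin f K)) = qfact (card K)"
proof (induction "card K" arbitrary: K S)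
  case 0
  then have "K = {}" "S = {}" by auto
  moreover have "Bij {} {} = {\<lambda>_. 0}" unfolding Bij_def by (auto simp: bij_betw_def)
  ultimately show ?case by (simp add: qfact_def nin_def)
next
  case (Suc m)
  note cK = Suc.hyps(2)[symmetric]
  note IH = Suc.hyps(1)
  define w where "w = Max K"
  have ne: "K \<noteq> {}" using cK by auto
  have wK: "w \<in> K" "\<And>u. u \<in> K \<Longrightarrow> u \<le> w" using Suc.prems ne w_def by auto
  define K0 where "K0 = K - {w}"
  have Keq: "K = insert w K0" using wK K0_def by auto
  have K: "w \<notin> K0" "finite K0" "\<forall>u\<in>K0. u < w"
    using wK K0_def Suc.prems by (auto simp: less_le)
  have cK0: "card K0 = m" using cK Keq K card_insert_disjoint by fastforce
  have cS: "card S = Suc m" using cK Suc.prems by simp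
  have "(\<Sum>f\<in>Bij K S. monom (1::int) (nin f K)) =
        (\<Sum>s\<in>S. \<Sum>f\<in>{f\<in>Bij K S. f w = s}. monom (1::int) (nin f K))"
  proof (rule sum.group[symmetric])
    show "finite (Bij K S)" using Suc.prems by (simp add: finite_Bij)
    show "finite S" using Suc.prems by simp
    show "(\<lambda>f. f w) ` Bij K S \<subseteq> S" using wK unfolding Bij_def bij_betw_def by auto
  qed
  also have "\<dots> = (\<Sum>s\<in>S. monom 1 (card {t\<in>S. t<s}) * qfact m)"
  proof (rule sum.cong[OF refl])
    fix s assume s: "s \<in> S"
    have "(\<Sum>f\<in>{f\<in>Bij K S. f w = s}. monom (1::int) (nin f K)) =
          (\<Sum>g\<in>Bij K0 (S - {s}). monom (1::int) (nin (g(w:=s)) K))"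
      using sum.reindex_bij_betw[OF Bij_upd[OF K(1) s], of "\<lambda>f. monom (1::int) (nin f K)"]
      unfolding Keq[symmetric] by simp
    also have "\<dots> = (\<Sum>g\<in>Bij K0 (S - {s}). monom 1 (card {t\<in>S. t<s}) * monom (1::int) (nin g K0))"
    proof (rule sum.cong[OF refl])
      fix g assume g: "g \<in> Bij K0 (S - {s})"
      have "nin (g(w:=s)) K = nin g K0 + card {t\<in>S. t<s}"
        using nin_split[OF g K(3) s K(2)] unfolding Keq[symmetric] .
      then show "monom (1::int) (nin (g(w:=s)) K) = monom 1 (card {t\<in>S. t<s}) * monom (1::int) (nin g K0)"
        by (simp add: mult_monom add.commute)
    qed
    also have "\<dots> = monom 1 (card {t\<in>S. t<s}) * (\<Sum>g\<in>Bij K0 (S - {s}). monom (1::int) (nin g K0))"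
      by (simp add: sum_distrib_left)
    also have "(\<Sum>g\<in>Bij K0 (S - {s}). monom (1::int) (nin g K0)) = qfact m"
    proof -
      have "card (S - {s}) = m" using cS s by simp
      then have "(\<Sum>g\<in>Bij K0 (S - {s}). monom (1::int) (nin g K0)) = qfact (card K0)"
        using IH[of K0 "S - {s}"] cK0 K(2) Suc.prems(2) by simp
      then show ?thesis using cK0 by simp
    qed
    finally show "(\<Sum>f\<in>{f\<in>Bij K S. f w = s}. monom (1::int) (nin f K)) = monom 1 (card {t\<in>S. t<s}) * qfact m" .
  qed
  also have "\<dots> = qint (card S) * qfact m"
    using rank_sum[of S] Suc.prems by (simp add: sum_distrib_right[symmetric])
  finally show ?case using cK cS qfact_Suc by simp
qed



locale setting =
  fixes I :: "nat set" and n a b :: nat and h :: "nat \<Rightarrow> nat"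
  assumes I_sub: "I \<subseteq> {1..<n}"
    and a_lt_b: "a < b"
    and bV: "b \<in> I \<union> {n}"
    and a0: "a = 0 \<or> a \<in> I"
    and gap: "\<And>v. v \<in> I \<union> {n} \<Longrightarrow> v \<le> a \<or> b \<le> v"
    and hV: "\<And>v. v \<in> I \<union> {n} \<Longrightarrow> h v \<in> I \<union> {n}"
    and hb: "b \<le> h b"
begin

definition "K = {a<..b}"
definition "I' = I \<union> {a+1..<b}"
definition "h' = (\<lambda>i. if a < i \<and> i \<le> b then h b else h i)"

lemma V_le: "v \<in> I \<union> {n} \<Longrightarrow> v \<le> n"
  using I_sub by auto

lemma b_le_n: "b \<le> n" using V_le bV by blast

lemma finV: "finite (I \<union> {n})"
  by (rule finite_subset[of _ "{..n}"]) (use V_le in auto)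

lemma finV': "finite (I' \<union> {n})"
  by (rule finite_subset[of _ "{..n}"]) (use V_le b_le_n in \<open>auto simp: I'_def\<close>)

lemma K_sub: "K \<subseteq> I' \<union> {n}"
  using bV unfolding K_def I'_def by auto

lemma V_sub: "I \<union> {n} \<subseteq> I' \<union> {n}"
  unfolding I'_def by auto

lemma notK_V': "v \<in> I' \<union> {n} \<Longrightarrow> v \<notin> K \<Longrightarrow> v \<in> I \<union> {n} \<and> v \<noteq> b"
  using a_lt_b unfolding K_def I'_def by auto

lemma bK: "b \<in> K" using a_lt_b unfolding K_def by auto

lemma V_K: "v \<in> I \<union> {n} \<Longrightarrow> v \<in> K \<longleftrightarrow> v = b"
  using gap[of v] bK unfolding K_def by auto

lemma cardK: "card K = b - a" unfolding K_def by simp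

lemma h'_K: "v \<in> K \<Longrightarrow> h' v = h b" unfolding K_def h'_def by auto
lemma h'_nK: "v \<notin> K \<Longrightarrow> h' v = h v" unfolding K_def h'_def by auto

lemma wt_b: "wt I b = b - a"
proof -
  have "Max ({0} \<union> {i \<in> I. i < b}) = a"
  proof (rule Max_eqI)
    show "finite ({0} \<union> {i \<in> I. i < b})"
      by (rule finite_subset[of _ "{..b}"]) auto
    show "\<And>y. y \<in> {0} \<union> {i \<in> I. i < b} \<Longrightarrow> y \<le> a"
      using gap by fastforce
    show "a \<in> {0} \<union> {i \<in> I. i < b}" using a0 a_lt_b by auto
  qed
  then show ?thesis unfolding wt_def by simp
qed

lemma wt_K: "v \<in> K \<Longrightarrow> wt I' v = 1"
proof -
  assume v: "v \<in> K"
  then have v1: "a < v" "v \<le> b" unfolding K_def by auto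
  have "Max ({0} \<union> {i \<in> I'. i < v}) = v - 1"
  proof (rule Max_eqI)
    show "finite ({0} \<union> {i \<in> I'. i < v})"
      by (rule finite_subset[of _ "{..v}"]) auto
    show "\<And>y. y \<in> {0} \<union> {i \<in> I'. i < v} \<Longrightarrow> y \<le> v - 1"
      using v1 by auto
    show "v - 1 \<in> {0} \<union> {i \<in> I'. i < v}"
    proof (cases "v - 1 = a")
      case True
      then show ?thesis using a0 v1 unfolding I'_def by auto
    next
      case False
      then show ?thesis using v1 unfolding I'_def by auto
    qed
  qed
  then show ?thesis unfolding wt_def using v1 by simp
qed

lemma wt_nK: "v \<in> I \<union> {n} \<Longrightarrow> v \<notin> K \<Longrightarrow> wt I' v = wt I v"
proof -
  assume vV: "v \<in> I \<union> {n}" and vK: "v \<notin> K"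
  then have vc: "v \<le> a \<or> b < v" unfolding K_def by auto
  have "Max ({0} \<union> {i \<in> I'. i < v}) = Max ({0} \<union> {i \<in> I. i < v})"
  proof (cases "v \<le> a")
    case True
    then have "{i \<in> I'. i < v} = {i \<in> I. i < v}" unfolding I'_def by auto
    then show ?thesis by simp
  next
    case False
    then have bv: "b < v" using vc by simp
    have bI: "b \<in> I" using bV bv V_le[OF vV] by auto
    have fin: "finite ({0} \<union> {i \<in> I. i < v})"
      by (rule finite_subset[of _ "{..v}"]) auto
    have bM: "b \<le> Max ({0} \<union> {i \<in> I. i < v})"
      using bI bv fin by (intro Max_ge) auto
    show ?thesis
    proof (rule Max_eqI)
      show "finite ({0} \<union> {i \<in> I'. i < v})"
        by (rule finite_subset[of _ "{..v}"]) auto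
      show "\<And>y. y \<in> {0} \<union> {i \<in> I'. i < v} \<Longrightarrow> y \<le> Max ({0} \<union> {i \<in> I. i < v})"
      proof -
        fix y assume y: "y \<in> {0} \<union> {i \<in> I'. i < v}"
        show "y \<le> Max ({0} \<union> {i \<in> I. i < v})"
        proof (cases "y \<in> {0} \<union> {i \<in> I. i < v}")
          case True
          then show ?thesis using fin by (intro Max_ge) auto
        next
          case False
          then have "y < b" using y unfolding I'_def by auto
          then show ?thesis using bM by simp
        qed
      qed
      show "Max ({0} \<union> {i \<in> I. i < v}) \<in> {0} \<union> {i \<in> I'. i < v}"
      proof -
        have "Max ({0} \<union> {i \<in> I. i < v}) \<in> {0} \<union> {i \<in> I. i < v}"
          using fin by (intro Max_in) auto
        then show ?thesis unfolding I'_def by auto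
      qed
    qed
  qed
  then show ?thesis unfolding wt_def by simp
qed

lemma hedge_char:
  "hedge I' n h' i j \<longleftrightarrow>
    (i \<notin> K \<and> j \<notin> K \<and> hedge I n h i j) \<or> (i \<in> K \<and> j \<in> K \<and> i < j) \<or>
    (i \<in> K \<and> j \<notin> K \<and> hedge I n h b j) \<or> (i \<notin> K \<and> j \<in> K \<and> hedge I n h i b)"
proof
  assume H: "hedge I' n h' i j"
  then have i: "i \<in> I' \<union> {n}" and j: "j \<in> I' \<union> {n}" and ij: "i < j" and jh: "j \<le> h' i"
    unfolding hedge_def by auto
  show "(i \<notin> K \<and> j \<notin> K \<and> hedge I n h i j) \<or> (i \<in> K \<and> j \<in> K \<and> i < j) \<or>
    (i \<in> K \<and> j \<notin> K \<and> hedge I n h b j) \<or> (i \<notin> K \<and> j \<in> K \<and> hedge I n h i b)"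
  proof (cases "i \<in> K"; cases "j \<in> K")
    assume "i \<in> K" "j \<in> K" then show ?thesis using ij by simp
  next
    assume iK: "i \<in> K" and jK: "j \<notin> K"
    have jV: "j \<in> I \<union> {n}" using notK_V'[OF j jK] by simp
    have "b < j" using iK jK ij unfolding K_def by auto
    moreover have "j \<le> h b" using jh h'_K[OF iK] by simp
    ultimately have "hedge I n h b j" using jV bV unfolding hedge_def by auto
    then show ?thesis using iK jK by simp
  next
    assume iK: "i \<notin> K" and jK: "j \<in> K"
    have iV: "i \<in> I \<union> {n}" using notK_V'[OF i iK] by simp
    have ia: "i \<le> a" using iK jK ij unfolding K_def by auto
    have hi: "h i \<in> I \<union> {n}" using hV[OF iV] .
    have "a < h i" using jh h'_nK[OF iK] jK unfolding K_def by auto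
    then have "b \<le> h i" using gap[OF hi] by auto
    moreover have "i < b" using ia a_lt_b by simp
    ultimately have "hedge I n h i b" using iV bV unfolding hedge_def by auto
    then show ?thesis using iK jK by simp
  next
    assume iK: "i \<notin> K" and jK: "j \<notin> K"
    have "i \<in> I \<union> {n}" "j \<in> I \<union> {n}" using notK_V'[OF i iK] notK_V'[OF j jK] by auto
    then have "hedge I n h i j" using ij jh h'_nK[OF iK] unfolding hedge_def by auto
    then show ?thesis using iK jK by simp
  qed
next
  assume H: "(i \<notin> K \<and> j \<notin> K \<and> hedge I n h i j) \<or> (i \<in> K \<and> j \<in> K \<and> i < j) \<or>
    (i \<in> K \<and> j \<notin> K \<and> hedge I n h b j) \<or> (i \<notin> K \<and> j \<in> K \<and> hedge I n h i b)"
  then consider (c1) "i \<notin> K" "j \<notin> K" "hedge I n h i j" | (c2) "i \<in> K" "j \<in> K" "i < j"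
    | (c3) "i \<in> K" "j \<notin> K" "hedge I n h b j" | (c4) "i \<notin> K" "j \<in> K" "hedge I n h i b"
    by blast
  then show "hedge I' n h' i j"
  proof cases
    case c1
    then show ?thesis using V_sub h'_nK[OF c1(1)] unfolding hedge_def by auto
  next
    case c2
    have "j \<le> b" using c2 unfolding K_def by auto
    then have "j \<le> h' i" using h'_K[OF c2(1)] hb by simp
    then show ?thesis using c2 K_sub unfolding hedge_def by auto
  next
    case c3
    have "i \<le> b" using c3 unfolding K_def by auto
    then show ?thesis using c3 K_sub V_sub h'_K[OF c3(1)] unfolding hedge_def by auto
  next
    case c4
    have iV: "i \<in> I \<union> {n}" using c4 unfolding hedge_def by auto
    have "i < b" using c4 unfolding hedge_def by auto
    then have "i \<le> a" using c4(1) unfolding K_def by auto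
    moreover have "a < j" "j \<le> b" using c4 unfolding K_def by auto
    ultimately show ?thesis using c4 K_sub iV V_sub h'_nK[OF c4(1)] unfolding hedge_def by auto
  qed
qed

end


lemma properD1: "\<gamma> \<in> proper_colorings I n h \<Longrightarrow> v \<notin> I \<union> {n} \<Longrightarrow> \<gamma> v = {}"
  unfolding proper_colorings_def by auto
lemma properD2: "\<gamma> \<in> proper_colorings I n h \<Longrightarrow> v \<in> I \<union> {n} \<Longrightarrow>
    finite (\<gamma> v) \<and> card (\<gamma> v) = wt I v \<and> 0 \<notin> \<gamma> v"
  unfolding proper_colorings_def by auto
lemma properD3: "\<gamma> \<in> proper_colorings I n h \<Longrightarrow> hedge I n h i j \<Longrightarrow> \<gamma> i \<inter> \<gamma> j = {}"
  unfolding proper_colorings_def by auto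
lemma properI:
  assumes "\<And>v. v \<notin> I \<union> {n} \<Longrightarrow> \<gamma> v = {}"
    and "\<And>v. v \<in> I \<union> {n} \<Longrightarrow> finite (\<gamma> v) \<and> card (\<gamma> v) = wt I v \<and> 0 \<notin> \<gamma> v"
    and "\<And>i j. hedge I n h i j \<Longrightarrow> \<gamma> i \<inter> \<gamma> j = {}"
  shows "\<gamma> \<in> proper_colorings I n h"
  using assms unfolding proper_colorings_def by auto

definition Tset :: "nat set \<Rightarrow> nat \<Rightarrow> (nat \<Rightarrow> nat) \<Rightarrow> (nat \<Rightarrow> nat set) \<Rightarrow> ((nat \<times> nat) \<times> (nat \<times> nat)) set" where
  "Tset I n h \<gamma> = (SIGMA e:{(i,j). hedge I n h i j}. (\<lambda>(i,j). {(x,y). x \<in> \<gamma> i \<and> y \<in> \<gamma> j \<and> x < y}) e)"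

lemma Tset_mem: "((i,j),(x,y)) \<in> Tset I n h \<gamma> \<longleftrightarrow> hedge I n h i j \<and> x \<in> \<gamma> i \<and> y \<in> \<gamma> j \<and> x < y"
  unfolding Tset_def by auto

lemma finite_edges: "finite (I \<union> {n}) \<Longrightarrow> finite {(i,j). hedge I n h i j}"
  by (rule finite_subset[of _ "(I \<union> {n}) \<times> (I \<union> {n})"]) (auto simp: hedge_def)

lemma asc_Tset:
  assumes fin: "finite (I \<union> {n})" and fg: "\<And>v. v \<in> I \<union> {n} \<Longrightarrow> finite (\<gamma> v)"
  shows "asc I n h \<gamma> = card (Tset I n h \<gamma>)" and "finite (Tset I n h \<gamma>)"
proof -
  have fe: "finite {(i,j). hedge I n h i j}" using finite_edges[OF fin] .
  have fc: "\<forall>e\<in>{(i,j). hedge I n h i j}. finite ((\<lambda>(i,j). {(x,y). x \<in> \<gamma> i \<and> y \<in> \<gamma> j \<and> x < y}) e)"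
  proof
    fix e assume e: "e \<in> {(i,j). hedge I n h i j}"
    obtain i j where eij: "e = (i,j)" by (cases e)
    have "i \<in> I \<union> {n}" "j \<in> I \<union> {n}" using e eij by (auto simp: hedge_def)
    then have "finite (\<gamma> i \<times> \<gamma> j)" using fg by auto
    then show "finite ((\<lambda>(i,j). {(x,y). x \<in> \<gamma> i \<and> y \<in> \<gamma> j \<and> x < y}) e)"
      unfolding eij by (rule finite_subset[rotated]) auto
  qed
  show "finite (Tset I n h \<gamma>)" unfolding Tset_def by (rule finite_SigmaI[OF fe], rule fc[rule_format])
  have "card (Tset I n h \<gamma>) = (\<Sum>e\<in>{(i,j). hedge I n h i j}. card ((\<lambda>(i,j). {(x,y). x \<in> \<gamma> i \<and> y \<in> \<gamma> j \<and> x < y}) e))"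
    unfolding Tset_def using fe fc by (rule card_SigmaI)
  also have "\<dots> = asc I n h \<gamma>"
    unfolding asc_def by (rule sum.cong) (auto split: prod.splits)
  finally show "asc I n h \<gamma> = card (Tset I n h \<gamma>)" by simp
qed

lemma Bij_ne:
  assumes "finite K" "finite S" "card K = card S"
  shows "Bij K S \<noteq> {}"
proof -
  obtain g where g: "bij_betw g K S" using finite_same_card_bij[OF assms] by blast
  let ?f = "\<lambda>v. if v \<in> K then g v else 0"
  have "bij_betw ?f K S = bij_betw g K S" by (rule bij_betw_cong) auto
  then have "?f \<in> Bij K S" using g unfolding Bij_def by auto
  then show ?thesis by blast
qed

context setting
begin

definition Phi :: "(nat \<Rightarrow> nat set) \<Rightarrow> (nat \<Rightarrow> nat) \<Rightarrow> nat \<Rightarrow> nat set" where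
  "Phi \<gamma> f = (\<lambda>v. if v \<in> K then {f v} else \<gamma> v)"

lemma Phi_K: "v \<in> K \<Longrightarrow> Phi \<gamma> f v = {f v}" unfolding Phi_def by simp
lemma Phi_nK: "v \<notin> K \<Longrightarrow> Phi \<gamma> f v = \<gamma> v" unfolding Phi_def by simp

lemma BijD:
  assumes "f \<in> Bij K S"
  shows "f ` K = S" "inj_on f K" "\<And>v. v \<notin> K \<Longrightarrow> f v = 0"
  using assms unfolding Bij_def bij_betw_def by auto

lemma Phi_proper:
  assumes g: "\<gamma> \<in> proper_colorings I n h" and f: "f \<in> Bij K (\<gamma> b)"
  shows "Phi \<gamma> f \<in> proper_colorings I' n h'"
proof (rule properI)
  fix v assume v: "v \<notin> I' \<union> {n}"
  then have "v \<notin> K" "v \<notin> I \<union> {n}" using K_sub V_sub by auto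
  then show "Phi \<gamma> f v = {}" using properD1[OF g] Phi_nK by simp
next
  fix v assume v: "v \<in> I' \<union> {n}"
  show "finite (Phi \<gamma> f v) \<and> card (Phi \<gamma> f v) = wt I' v \<and> 0 \<notin> Phi \<gamma> f v"
  proof (cases "v \<in> K")
    case True
    have "f v \<in> \<gamma> b" using BijD(1)[OF f] True by blast
    moreover have "0 \<notin> \<gamma> b" using properD2[OF g bV] by simp
    ultimately have "f v \<noteq> 0" by (cases "f v = 0") simp_all
    then show ?thesis using True Phi_K wt_K by auto
  next
    case False
    have vV: "v \<in> I \<union> {n}" using notK_V'[OF v False] by simp
    show ?thesis using properD2[OF g vV] Phi_nK[OF False] wt_nK[OF vV False] by simp
  qed
next
  fix i j assume H: "hedge I' n h' i j"
  then consider (c1) "i \<notin> K" "j \<notin> K" "hedge I n h i j" | (c2) "i \<in> K" "j \<in> K" "i < j"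
    | (c3) "i \<in> K" "j \<notin> K" "hedge I n h b j" | (c4) "i \<notin> K" "j \<in> K" "hedge I n h i b"
    using hedge_char by blast
  then show "Phi \<gamma> f i \<inter> Phi \<gamma> f j = {}"
  proof cases
    case c1
    then show ?thesis using properD3[OF g c1(3)] Phi_nK by simp
  next
    case c2
    have "f i \<noteq> f j" using BijD(2)[OF f] c2 unfolding inj_on_def by force
    then show ?thesis using c2 Phi_K by simp
  next
    case c3
    have "f i \<in> \<gamma> b" using BijD(1)[OF f] c3 by blast
    then show ?thesis using properD3[OF g c3(3)] c3 Phi_K Phi_nK by auto
  next
    case c4
    have "f j \<in> \<gamma> b" using BijD(1)[OF f] c4 by blast
    then show ?thesis using properD3[OF g c4(3)] c4 Phi_K Phi_nK by auto
  qed
qed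

lemma Phi_xexp:
  assumes g: "\<gamma> \<in> proper_colorings I n h" and f: "f \<in> Bij K (\<gamma> b)"
  shows "xexp I' n (Phi \<gamma> f) = xexp I n \<gamma>"
proof
  fix x
  let ?A1 = "{v \<in> I \<union> {n}. v \<noteq> b \<and> x \<in> \<gamma> v}"
  let ?A2 = "{v \<in> K. f v = x}"
  let ?B2 = "if x \<in> \<gamma> b then {b} else {}"
  have eqA: "{v \<in> I' \<union> {n}. x \<in> Phi \<gamma> f v} = ?A1 \<union> ?A2"
  proof (rule set_eqI)
    fix v
    show "v \<in> {v \<in> I' \<union> {n}. x \<in> Phi \<gamma> f v} \<longleftrightarrow> v \<in> ?A1 \<union> ?A2"
    proof (cases "v \<in> K")
      case True
      have "v \<notin> I \<union> {n} \<or> v = b" using V_K True by blast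
      then show ?thesis using True K_sub Phi_K[OF True] by auto
    next
      case False
      have "v \<noteq> b" using False bK by auto
      then show ?thesis using Phi_nK[OF False] V_sub notK_V'[OF _ False] False by auto
    qed
  qed
  have eqB: "{v \<in> I \<union> {n}. x \<in> \<gamma> v} = ?A1 \<union> ?B2" using bV by (auto split: if_splits)
  have finA1: "finite ?A1" using finV by simp
  have d1: "?A1 \<inter> ?A2 = {}"
  proof (intro equals0I)
    fix v assume "v \<in> ?A1 \<inter> ?A2"
    then have "v \<in> I \<union> {n}" "v \<noteq> b" "v \<in> K" by auto
    then show False using V_K[of v] by simp
  qed
  have d2: "?A1 \<inter> ?B2 = {}" by auto
  have cA2: "card ?A2 = card ?B2"
  proof (cases "x \<in> \<gamma> b")
    case True
    then have "x \<in> f ` K" using BijD(1)[OF f] by simp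
    then obtain u where u: "u \<in> K" "f u = x" by (rule imageE) simp
    then have "?A2 = {u}" using BijD(2)[OF f] unfolding inj_on_def by auto
    then show ?thesis using True by simp
  next
    case False
    then have "x \<notin> f ` K" using BijD(1)[OF f] by simp
    then have "?A2 = {}" by auto
    then have "card ?A2 = 0" by (simp only: card.empty)
    then show ?thesis using False by simp
  qed
  have finA2: "finite ?A2" using finite_subset[OF _ finV', of ?A2] K_sub by auto
  have "xexp I' n (Phi \<gamma> f) x = card (?A1 \<union> ?A2)" unfolding xexp_def eqA ..
  also have "\<dots> = card ?A1 + card ?A2" using card_Un_disjoint[OF finA1 finA2 d1] .
  also have "\<dots> = card ?A1 + card ?B2" using cA2 by simp
  also have "\<dots> = card (?A1 \<union> ?B2)" using card_Un_disjoint[OF finA1 _ d2] by simp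
  also have "\<dots> = xexp I n \<gamma> x" unfolding xexp_def eqB ..
  finally show "xexp I' n (Phi \<gamma> f) x = xexp I n \<gamma> x" .
qed

end


context setting
begin

definition cl :: "nat \<Rightarrow> nat" where "cl v = (if v \<in> K then b else v)"

lemma cl_inj:
  assumes f: "f \<in> Bij K S" and z1: "z \<in> Phi \<gamma> f u1" and z2: "z \<in> Phi \<gamma> f u2" and c: "cl u1 = cl u2"
  shows "u1 = u2"
proof (cases "u1 \<in> K"; cases "u2 \<in> K")
  assume k1: "u1 \<in> K" and k2: "u2 \<in> K"
  then have "f u1 = f u2" using z1 z2 Phi_K by simp
  then show ?thesis using BijD(2)[OF f] k1 k2 unfolding inj_on_def by blast
next
  assume k1: "u1 \<in> K" and k2: "u2 \<notin> K"
  then have "u2 = b" using c unfolding cl_def by simp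
  then show ?thesis using k2 bK by simp
next
  assume k1: "u1 \<notin> K" and k2: "u2 \<in> K"
  then have "u1 = b" using c unfolding cl_def by simp
  then show ?thesis using k1 bK by simp
next
  assume k1: "u1 \<notin> K" and k2: "u2 \<notin> K"
  then show ?thesis using c unfolding cl_def by simp
qed

lemma cl_lift:
  assumes f: "f \<in> Bij K (\<gamma> b)" and v: "v \<in> I \<union> {n}" and z: "z \<in> \<gamma> v"
  obtains u where "cl u = v" "z \<in> Phi \<gamma> f u" "u \<in> K \<longleftrightarrow> v = b"
proof (cases "v = b")
  case True
  then have "z \<in> f ` K" using z BijD(1)[OF f] by simp
  then obtain u where u: "u \<in> K" "z = f u" by (rule imageE) simp
  have "cl u = v" using u True unfolding cl_def by simp
  moreover have "z \<in> Phi \<gamma> f u" using u Phi_K by simp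
  ultimately show ?thesis using that u True by blast
next
  case False
  then have vK: "v \<notin> K" using V_K[OF v] by simp
  have "cl v = v" using vK unfolding cl_def by simp
  moreover have "z \<in> Phi \<gamma> f v" using z Phi_nK[OF vK] by simp
  ultimately show ?thesis using that vK False by blast
qed

lemma Phi_asc:
  assumes g: "\<gamma> \<in> proper_colorings I n h" and f: "f \<in> Bij K (\<gamma> b)"
  shows "asc I' n h' (Phi \<gamma> f) = asc I n h \<gamma> + nin f K"
proof -
  have pg': "Phi \<gamma> f \<in> proper_colorings I' n h'" by (rule Phi_proper[OF g f])
  have fin': "\<And>v. v \<in> I' \<union> {n} \<Longrightarrow> finite (Phi \<gamma> f v)" using properD2[OF pg'] by blast
  have fin: "\<And>v. v \<in> I \<union> {n} \<Longrightarrow> finite (\<gamma> v)" using properD2[OF g] by blast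
  have A': "asc I' n h' (Phi \<gamma> f) = card (Tset I' n h' (Phi \<gamma> f))"
    using asc_Tset(1)[OF finV' fin'] .
  have fT': "finite (Tset I' n h' (Phi \<gamma> f))" using asc_Tset(2)[OF finV' fin'] .
  have A: "asc I n h \<gamma> = card (Tset I n h \<gamma>)" using asc_Tset(1)[OF finV fin] .
  define T' where "T' = Tset I' n h' (Phi \<gamma> f)"
  define T2 where "T2 = {e \<in> T'. fst (fst e) \<in> K \<and> snd (fst e) \<in> K}"
  define T1 where "T1 = {e \<in> T'. \<not> (fst (fst e) \<in> K \<and> snd (fst e) \<in> K)}"
  have un: "T1 \<union> T2 = T'" unfolding T1_def T2_def by auto
  have fT1: "finite T1" using fT' unfolding T1_def T'_def by simp
  have fT2: "finite T2" using fT' unfolding T2_def T'_def by simp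
  have dj: "T1 \<inter> T2 = {}" unfolding T1_def T2_def by auto
  have cT': "card T' = card T1 + card T2"
    using card_Un_disjoint[OF fT1 fT2 dj] un by simp
  define N where "N = {(u,v). u \<in> K \<and> v \<in> K \<and> u < v \<and> f u < f v}"
  define mk where "mk = (\<lambda>(u::nat,v::nat). ((u,v),(f u, f v)))"
  have T2eq: "T2 = mk ` N"
  proof
    show "T2 \<subseteq> mk ` N"
    proof
      fix e assume e: "e \<in> T2"
      obtain i j x y where eij: "e = ((i,j),(x,y))" by (metis surj_pair)
      have H: "hedge I' n h' i j" "x \<in> Phi \<gamma> f i" "y \<in> Phi \<gamma> f j" "x < y" "i \<in> K" "j \<in> K"
        using e unfolding eij T2_def T'_def by (auto simp: Tset_mem)
      have "x = f i" "y = f j" using H Phi_K by auto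
      moreover have "i < j" using H(1) unfolding hedge_def by simp
      ultimately have "(i,j) \<in> N" "e = mk (i,j)" using H unfolding N_def mk_def eij by auto
      then show "e \<in> mk ` N" by blast
    qed
    show "mk ` N \<subseteq> T2"
    proof
      fix e assume "e \<in> mk ` N"
      then obtain u v where uv: "(u,v) \<in> N" "e = mk (u,v)" by auto
      have H: "u \<in> K" "v \<in> K" "u < v" "f u < f v" using uv(1) unfolding N_def by auto
      have "hedge I' n h' u v" using hedge_char H by blast
      then show "e \<in> T2" using H uv(2) Phi_K unfolding T2_def T'_def mk_def Tset_mem by (simp add: Tset_mem)
    qed
  qed
  have cT2: "card T2 = nin f K"
  proof -
    have "inj_on mk N" unfolding mk_def inj_on_def by auto
    then have "card (mk ` N) = card N" by (rule card_image)
    then show ?thesis unfolding T2eq nin_def N_def by simp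
  qed
  define cm where "cm = (\<lambda>e::(nat \<times> nat) \<times> (nat \<times> nat). ((cl (fst (fst e)), cl (snd (fst e))), snd e))"
  have cminj: "inj_on cm T1"
  proof (rule inj_onI)
    fix e1 e2 assume e1: "e1 \<in> T1" and e2: "e2 \<in> T1" and ce: "cm e1 = cm e2"
    obtain i1 j1 x1 y1 where e1d: "e1 = ((i1,j1),(x1,y1))" by (metis surj_pair)
    obtain i2 j2 x2 y2 where e2d: "e2 = ((i2,j2),(x2,y2))" by (metis surj_pair)
    have c: "cl i1 = cl i2" "cl j1 = cl j2" "x1 = x2" "y1 = y2" using ce unfolding cm_def e1d e2d by auto
    have m1: "x1 \<in> Phi \<gamma> f i1" "y1 \<in> Phi \<gamma> f j1" using e1 unfolding e1d T1_def T'_def by (auto simp: Tset_mem)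
    have m2: "x2 \<in> Phi \<gamma> f i2" "y2 \<in> Phi \<gamma> f j2" using e2 unfolding e2d T1_def T'_def by (auto simp: Tset_mem)
    have "i1 = i2" using cl_inj[OF f m1(1) _ c(1)] m2(1) c(3) by simp
    moreover have "j1 = j2" using cl_inj[OF f m1(2) _ c(2)] m2(2) c(4) by simp
    ultimately show "e1 = e2" using e1d e2d c by simp
  qed
  have cmimg: "cm ` T1 = Tset I n h \<gamma>"
  proof
    show "cm ` T1 \<subseteq> Tset I n h \<gamma>"
    proof
      fix e' assume "e' \<in> cm ` T1"
      then obtain e where e: "e \<in> T1" "e' = cm e" by blast
      obtain i j x y where ed: "e = ((i,j),(x,y))" by (metis surj_pair)
      have H: "hedge I' n h' i j" "x \<in> Phi \<gamma> f i" "y \<in> Phi \<gamma> f j" "x < y" "\<not> (i \<in> K \<and> j \<in> K)"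
        using e(1) unfolding ed T1_def T'_def by (auto simp: Tset_mem)
      have e'd: "e' = ((cl i, cl j), (x,y))" using e(2) ed cm_def by simp
      from H(1) consider (c1) "i \<notin> K" "j \<notin> K" "hedge I n h i j" | (c2) "i \<in> K" "j \<in> K" "i < j"
        | (c3) "i \<in> K" "j \<notin> K" "hedge I n h b j" | (c4) "i \<notin> K" "j \<in> K" "hedge I n h i b"
        using hedge_char by blast
      then show "e' \<in> Tset I n h \<gamma>"
      proof cases
        case c1
        then show ?thesis using H e'd Phi_nK unfolding cl_def by (simp add: Tset_mem)
      next
        case c2
        then show ?thesis using H by simp
      next
        case c3
        have "x = f i" using H(2) Phi_K[OF c3(1)] by simp
        moreover have "f i \<in> f ` K" using c3(1) by (rule imageI)
        ultimately have "x \<in> \<gamma> b" using BijD(1)[OF f] by simp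
        then show ?thesis using H e'd c3 Phi_nK[OF c3(2)] unfolding cl_def by (simp add: Tset_mem)
      next
        case c4
        have "y = f j" using H(3) Phi_K[OF c4(2)] by simp
        moreover have "f j \<in> f ` K" using c4(2) by (rule imageI)
        ultimately have "y \<in> \<gamma> b" using BijD(1)[OF f] by simp
        then show ?thesis using H e'd c4 Phi_nK[OF c4(1)] unfolding cl_def by (simp add: Tset_mem)
      qed
    qed
    show "Tset I n h \<gamma> \<subseteq> cm ` T1"
    proof
      fix e assume e: "e \<in> Tset I n h \<gamma>"
      obtain i j x y where ed: "e = ((i,j),(x,y))" by (metis surj_pair)
      have H: "hedge I n h i j" "x \<in> \<gamma> i" "y \<in> \<gamma> j" "x < y"
        using e unfolding ed by (auto simp: Tset_mem)
      have iV: "i \<in> I \<union> {n}" and jV: "j \<in> I \<union> {n}" and ij: "i < j" using H(1) unfolding hedge_def by auto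
      obtain ui where ui: "cl ui = i" "x \<in> Phi \<gamma> f ui" "ui \<in> K \<longleftrightarrow> i = b" using cl_lift[OF f iV H(2)] by blast
      obtain uj where uj: "cl uj = j" "y \<in> Phi \<gamma> f uj" "uj \<in> K \<longleftrightarrow> j = b" using cl_lift[OF f jV H(3)] by blast
      have nb: "\<not> (ui \<in> K \<and> uj \<in> K)" using ui(3) uj(3) ij by auto
      have "hedge I' n h' ui uj"
      proof (cases "i = b")
        case True
        then have k: "ui \<in> K" "uj \<notin> K" using ui(3) uj(3) ij by auto
        moreover have "uj = j" using uj(1) k(2) unfolding cl_def by simp
        ultimately show ?thesis using H(1) True by (intro hedge_char[THEN iffD2]) simp
      next
        case False
        note iF = False
        show ?thesis
        proof (cases "j = b")
          case True
          then have "ui \<notin> K" "uj \<in> K" using ui(3) uj(3) iF by auto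
          moreover have "ui = i" using ui(1) \<open>ui \<notin> K\<close> unfolding cl_def by simp
          ultimately show ?thesis using H(1) True by (intro hedge_char[THEN iffD2]) simp
        next
          case False
          then have "ui \<notin> K" "uj \<notin> K" using ui(3) uj(3) iF by auto
          moreover have "ui = i" "uj = j" using ui(1) uj(1) \<open>ui \<notin> K\<close> \<open>uj \<notin> K\<close> unfolding cl_def by auto
          ultimately show ?thesis using H(1) by (intro hedge_char[THEN iffD2]) simp
        qed
      qed
      then have "((ui,uj),(x,y)) \<in> T1" using nb ui(2) uj(2) H(4) unfolding T1_def T'_def by (simp add: Tset_mem)
      moreover have "e = cm ((ui,uj),(x,y))" using ed ui(1) uj(1) unfolding cm_def by simp
      ultimately show "e \<in> cm ` T1" by blast
    qed
  qed
  have cT1: "card T1 = card (Tset I n h \<gamma>)"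
    using card_image[OF cminj] cmimg by simp
  show ?thesis using A' A cT' cT1 cT2 unfolding T'_def by simp
qed

end


context setting
begin

lemma Phi_inj:
  assumes g1: "\<gamma>1 \<in> proper_colorings I n h" and f1: "f1 \<in> Bij K (\<gamma>1 b)"
    and g2: "\<gamma>2 \<in> proper_colorings I n h" and f2: "f2 \<in> Bij K (\<gamma>2 b)"
    and eq: "Phi \<gamma>1 f1 = Phi \<gamma>2 f2"
  shows "\<gamma>1 = \<gamma>2 \<and> f1 = f2"
proof -
  have ff: "f1 = f2"
  proof
    fix v show "f1 v = f2 v"
    proof (cases "v \<in> K")
      case True
      have "Phi \<gamma>1 f1 v = Phi \<gamma>2 f2 v" using eq by simp
      then show ?thesis using Phi_K[OF True] by simp
    next
      case False
      then show ?thesis using BijD(3)[OF f1] BijD(3)[OF f2] by simp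
    qed
  qed
  have gg: "\<gamma>1 = \<gamma>2"
  proof
    fix v show "\<gamma>1 v = \<gamma>2 v"
    proof (cases "v \<in> K")
      case False
      have "Phi \<gamma>1 f1 v = Phi \<gamma>2 f2 v" using eq by simp
      then show ?thesis using Phi_nK[OF False] by simp
    next
      case True
      show ?thesis
      proof (cases "v = b")
        case True
        then show ?thesis using BijD(1)[OF f1] BijD(1)[OF f2] ff by simp
      next
        case False
        have "v \<notin> I \<union> {n}" using V_K[of v] False \<open>v \<in> K\<close> by auto
        then show ?thesis using properD1[OF g1] properD1[OF g2] by simp
      qed
    qed
  qed
  show ?thesis using ff gg by simp
qed

lemma Phi_surj:
  assumes g': "\<gamma>' \<in> proper_colorings I' n h'"
  obtains \<gamma> f where "\<gamma> \<in> proper_colorings I n h" "f \<in> Bij K (\<gamma> b)" "\<gamma>' = Phi \<gamma> f"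
proof -
  define f where "f v = (if v \<in> K then (THE x. \<gamma>' v = {x}) else 0)" for v
  have fK: "\<gamma>' v = {f v}" if v: "v \<in> K" for v
  proof -
    have "v \<in> I' \<union> {n}" using v K_sub by auto
    then have "card (\<gamma>' v) = 1" using properD2[OF g'] wt_K[OF v] by simp
    then obtain x where x: "\<gamma>' v = {x}" using card_1_singleton_iff[of "\<gamma>' v"] by auto
    have "(THE x. \<gamma>' v = {x}) = x" using x by (intro the_equality) auto
    then show ?thesis using x v unfolding f_def by simp
  qed
  define \<gamma> where "\<gamma> v = (if v = b then f ` K else if v \<in> K then {} else \<gamma>' v)" for v
  have eq: "\<gamma>' = Phi \<gamma> f"
  proof
    fix v show "\<gamma>' v = Phi \<gamma> f v"
    proof (cases "v \<in> K")
      case True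
      then show ?thesis using fK Phi_K by simp
    next
      case False
      then have "v \<noteq> b" using bK by auto
      then show ?thesis using False Phi_nK unfolding \<gamma>_def by simp
    qed
  qed
  have finj: "inj_on f K"
  proof (rule inj_onI)
    fix u v assume u: "u \<in> K" and v: "v \<in> K" and fe: "f u = f v"
    show "u = v"
    proof (rule ccontr)
      assume "u \<noteq> v"
      then consider "u < v" | "v < u" by linarith
      then show False
      proof cases
        case 1
        have "hedge I' n h' u v" using u v 1 by (intro hedge_char[THEN iffD2]) simp
        then have "\<gamma>' u \<inter> \<gamma>' v = {}" by (rule properD3[OF g'])
        then show False using fK[OF u] fK[OF v] fe by simp
      next
        case 2
        have "hedge I' n h' v u" using u v 2 by (intro hedge_char[THEN iffD2]) simp
        then have "\<gamma>' v \<inter> \<gamma>' u = {}" by (rule properD3[OF g'])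
        then show False using fK[OF u] fK[OF v] fe by simp
      qed
    qed
  qed
  have gb: "\<gamma> b = f ` K" unfolding \<gamma>_def by simp
  have fB: "f \<in> Bij K (\<gamma> b)"
    unfolding Bij_def bij_betw_def gb using finj unfolding f_def by auto
  have nz: "0 \<notin> f ` K"
  proof
    assume "0 \<in> f ` K"
    then obtain u where u: "u \<in> K" "f u = 0" by auto
    have "u \<in> I' \<union> {n}" using u K_sub by auto
    then have "0 \<notin> \<gamma>' u" using properD2[OF g'] by simp
    then show False using fK[OF u(1)] u(2) by simp
  qed
  have gp: "\<gamma> \<in> proper_colorings I n h"
  proof (rule properI)
    fix v assume v: "v \<notin> I \<union> {n}"
    have vb: "v \<noteq> b" using v bV by auto
    show "\<gamma> v = {}"
    proof (cases "v \<in> K")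
      case True
      then show ?thesis using vb unfolding \<gamma>_def by simp
    next
      case False
      have "v \<notin> I' \<union> {n}" using notK_V'[of v] False v by auto
      then show ?thesis using False vb properD1[OF g'] unfolding \<gamma>_def by simp
    qed
  next
    fix v assume v: "v \<in> I \<union> {n}"
    show "finite (\<gamma> v) \<and> card (\<gamma> v) = wt I v \<and> 0 \<notin> \<gamma> v"
    proof (cases "v = b")
      case True
      have "finite K" unfolding K_def by simp
      moreover have "card (f ` K) = b - a" using card_image[OF finj] cardK by simp
      ultimately show ?thesis using True gb wt_b nz by simp
    next
      case False
      then have vK: "v \<notin> K" using V_K[OF v] by simp
      have "v \<in> I' \<union> {n}" using v V_sub by auto
      then show ?thesis using properD2[OF g'] wt_nK[OF v vK] False vK unfolding \<gamma>_def by simp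
    qed
  next
    fix i j assume H: "hedge I n h i j"
    have iV: "i \<in> I \<union> {n}" and jV: "j \<in> I \<union> {n}" and ij: "i < j" using H unfolding hedge_def by auto
    show "\<gamma> i \<inter> \<gamma> j = {}"
    proof (cases "i = b")
      case True
      then have jb: "j \<noteq> b" using ij by simp
      then have jK: "j \<notin> K" using V_K[OF jV] by simp
      have "f u \<notin> \<gamma>' j" if u: "u \<in> K" for u
      proof -
        have "hedge I' n h' u j" using u jK H True by (intro hedge_char[THEN iffD2]) simp
        then have "\<gamma>' u \<inter> \<gamma>' j = {}" by (rule properD3[OF g'])
        then show ?thesis using fK[OF u] by simp
      qed
      moreover have "\<gamma> j = \<gamma>' j" using jb jK unfolding \<gamma>_def by simp
      ultimately show ?thesis using True gb by auto
    next
      case False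
      then have iK: "i \<notin> K" using V_K[OF iV] by simp
      have gi: "\<gamma> i = \<gamma>' i" using False iK unfolding \<gamma>_def by simp
      show ?thesis
      proof (cases "j = b")
        case True
        have "f u \<notin> \<gamma>' i" if u: "u \<in> K" for u
        proof -
          have "hedge I' n h' i u" using u iK H True by (intro hedge_char[THEN iffD2]) simp
          then have "\<gamma>' i \<inter> \<gamma>' u = {}" by (rule properD3[OF g'])
          then show ?thesis using fK[OF u] by simp
        qed
        then show ?thesis using True gb gi by auto
      next
        case False
        then have jK: "j \<notin> K" using V_K[OF jV] by simp
        have gj: "\<gamma> j = \<gamma>' j" using False jK unfolding \<gamma>_def by simp
        have "hedge I' n h' i j" using iK jK H by (intro hedge_char[THEN iffD2]) simp
        then show ?thesis using properD3[OF g'] gi gj by simp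
      qed
    qed
  qed
  show ?thesis using that gp fB eq by blast
qed

end


context setting
begin

theorem main: "csf I' n h' \<alpha> = qfact (b - a) * csf I n h \<alpha>"
proof -
  define P where "P = {\<gamma> \<in> proper_colorings I n h. xexp I n \<gamma> = \<alpha>}"
  define P' where "P' = {\<gamma> \<in> proper_colorings I' n h'. xexp I' n \<gamma> = \<alpha>}"
  define S where "S = (SIGMA \<gamma>:P. Bij K (\<gamma> b))"
  define F where "F = (\<lambda>p::(nat \<Rightarrow> nat set) \<times> (nat \<Rightarrow> nat). Phi (fst p) (snd p))"
  have finK: "finite K" unfolding K_def by simp
  have cb: "finite (\<gamma> b) \<and> card (\<gamma> b) = card K" if g: "\<gamma> \<in> P" for \<gamma>
    using properD2[of \<gamma> I n h b] g bV wt_b cardK unfolding P_def by auto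
  have img: "F ` S = P'"
  proof
    show "F ` S \<subseteq> P'"
    proof
      fix x assume "x \<in> F ` S"
      then obtain \<gamma> f where p: "\<gamma> \<in> P" "f \<in> Bij K (\<gamma> b)" "x = Phi \<gamma> f"
        unfolding S_def F_def by auto
      have g: "\<gamma> \<in> proper_colorings I n h" "xexp I n \<gamma> = \<alpha>" using p(1) unfolding P_def by auto
      show "x \<in> P'" using Phi_proper[OF g(1) p(2)] Phi_xexp[OF g(1) p(2)] g(2) p(3)
        unfolding P'_def by simp
    qed
    show "P' \<subseteq> F ` S"
    proof
      fix x assume x: "x \<in> P'"
      then have x1: "x \<in> proper_colorings I' n h'" "xexp I' n x = \<alpha>" unfolding P'_def by auto
      obtain \<gamma> f where gf: "\<gamma> \<in> proper_colorings I n h" "f \<in> Bij K (\<gamma> b)" "x = Phi \<gamma> f"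
        using Phi_surj[OF x1(1)] by blast
      have "xexp I n \<gamma> = \<alpha>" using Phi_xexp[OF gf(1) gf(2)] x1(2) gf(3) by simp
      then have "(\<gamma>, f) \<in> S" using gf unfolding S_def P_def by simp
      moreover have "x = F (\<gamma>, f)" using gf(3) unfolding F_def by simp
      ultimately show "x \<in> F ` S" by blast
    qed
  qed
  have inj: "inj_on F S"
  proof (rule inj_onI)
    fix p1 p2 assume p1: "p1 \<in> S" and p2: "p2 \<in> S" and e: "F p1 = F p2"
    have q1: "fst p1 \<in> proper_colorings I n h" "snd p1 \<in> Bij K (fst p1 b)"
      using p1 unfolding S_def P_def by auto
    have q2: "fst p2 \<in> proper_colorings I n h" "snd p2 \<in> Bij K (fst p2 b)"
      using p2 unfolding S_def P_def by auto
    have "fst p1 = fst p2 \<and> snd p1 = snd p2"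
      using Phi_inj[OF q1 q2] e unfolding F_def by simp
    then show "p1 = p2" by (simp add: prod_eq_iff)
  qed
  have inner: "(\<Sum>f\<in>Bij K (\<gamma> b). monom (1::int) (nin f K)) = qfact (b - a)" if g: "\<gamma> \<in> P" for \<gamma>
    using inv_gen[of K "\<gamma> b"] cb[OF g] finK cardK by simp
  show ?thesis
  proof (cases "finite P")
    case True
    have finS: "finite S" unfolding S_def
      by (rule finite_SigmaI[OF True]) (use finite_Bij finK cb in blast)
    have "csf I' n h' \<alpha> = (\<Sum>x\<in>P'. monom 1 (asc I' n h' x))" unfolding csf_def P'_def ..
    also have "\<dots> = (\<Sum>p\<in>S. monom 1 (asc I' n h' (F p)))"
      unfolding img[symmetric] by (simp add: sum.reindex[OF inj])
    also have "\<dots> = (\<Sum>p\<in>S. monom 1 (asc I n h (fst p)) * monom 1 (nin (snd p) K))"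
    proof (rule sum.cong[OF refl])
      fix p assume p: "p \<in> S"
      have q: "fst p \<in> proper_colorings I n h" "snd p \<in> Bij K (fst p b)"
        using p unfolding S_def P_def by auto
      show "monom (1::int) (asc I' n h' (F p)) = monom 1 (asc I n h (fst p)) * monom 1 (nin (snd p) K)"
        using Phi_asc[OF q] unfolding F_def by (simp add: mult_monom)
    qed
    also have "\<dots> = (\<Sum>(\<gamma>,f)\<in>S. monom 1 (asc I n h \<gamma>) * monom 1 (nin f K))"
      by (simp add: case_prod_beta')
    also have "\<dots> = (\<Sum>\<gamma>\<in>P. \<Sum>f\<in>Bij K (\<gamma> b). monom 1 (asc I n h \<gamma>) * monom 1 (nin f K))"
      unfolding S_def by (rule sum.Sigma[symmetric, OF True]) (use finite_Bij finK cb in blast)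
    also have "\<dots> = (\<Sum>\<gamma>\<in>P. monom 1 (asc I n h \<gamma>) * qfact (b - a))"
    proof (rule sum.cong[OF refl])
      fix \<gamma> assume g: "\<gamma> \<in> P"
      have "(\<Sum>f\<in>Bij K (\<gamma> b). monom (1::int) (asc I n h \<gamma>) * monom 1 (nin f K))
          = monom 1 (asc I n h \<gamma>) * (\<Sum>f\<in>Bij K (\<gamma> b). monom (1::int) (nin f K))"
        by (simp add: sum_distrib_left)
      then show "(\<Sum>f\<in>Bij K (\<gamma> b). monom (1::int) (asc I n h \<gamma>) * monom 1 (nin f K))
          = monom 1 (asc I n h \<gamma>) * qfact (b - a)" using inner[OF g] by simp
    qed
    also have "\<dots> = (\<Sum>\<gamma>\<in>P. monom 1 (asc I n h \<gamma>)) * qfact (b - a)"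
      by (simp add: sum_distrib_right)
    also have "\<dots> = qfact (b - a) * csf I n h \<alpha>"
      unfolding csf_def P_def by (simp add: mult.commute)
    finally show ?thesis .
  next
    case False
    have "infinite S"
    proof
      assume "finite S"
      then have "finite (fst ` S)" by simp
      moreover have "fst ` S = P"
      proof
        show "fst ` S \<subseteq> P" unfolding S_def by auto
        show "P \<subseteq> fst ` S"
        proof
          fix \<gamma> assume g: "\<gamma> \<in> P"
          have "Bij K (\<gamma> b) \<noteq> {}" using Bij_ne[of K "\<gamma> b"] finK cb[OF g] by simp
          then obtain f where "f \<in> Bij K (\<gamma> b)" by blast
          then have "(\<gamma>, f) \<in> S" using g unfolding S_def by simp
          then show "\<gamma> \<in> fst ` S" by (metis fst_conv image_eqI)
        qed
      qed
      ultimately show False using False by simp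
    qed
    then have "infinite P'" using img finite_image_iff[OF inj] by simp
    then have "csf I' n h' \<alpha> = 0" unfolding csf_def P'_def[symmetric] by simp
    moreover have "csf I n h \<alpha> = 0" unfolding csf_def P_def[symmetric] using False by simp
    ultimately show ?thesis by simp
  qed
qed

end

lemma idx_props:
  assumes I: "I \<subseteq> {1..<n}" and n: "1 \<le> n" and k1: "1 \<le> k" and k2: "k \<le> card I + 1"
  shows "idx I n (k - 1) < idx I n k" "idx I n k \<in> I \<union> {n}"
    "idx I n (k - 1) = 0 \<or> idx I n (k - 1) \<in> I"
    "\<And>v. v \<in> I \<union> {n} \<Longrightarrow> v \<le> idx I n (k - 1) \<or> idx I n k \<le> v"
proof -
  define L where "L = sorted_list_of_set I"
  have finI: "finite I" using I finite_subset by blast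
  have sL: "sorted_wrt (<) L" unfolding L_def by (rule strict_sorted_list_of_set)
  have sL': "sorted L" unfolding L_def by (rule sorted_sorted_list_of_set)
  have setL: "set L = I" unfolding L_def using finI by simp
  have lenL: "length L = card I" unfolding L_def by simp
  have nthI: "L ! j \<in> I" if "j < card I" for j using that setL lenL nth_mem by metis
  have Iltn: "v < n" if "v \<in> I" for v using that I by auto
  have Ige1: "1 \<le> v" if "v \<in> I" for v using that I by auto
  have ia: "idx I n (k - 1) = (if k = 1 then 0 else L ! (k - 2))"
  proof (cases "k = 1")
    case True
    then show ?thesis by (simp add: idx_def)
  next
    case False
    then have "k - 1 \<noteq> 0" "k - 1 \<le> card I" "k - 1 - 1 = k - 2" using k1 k2 by auto
    then show ?thesis using False unfolding idx_def L_def by simp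
  qed
  have ib: "idx I n k = (if k \<le> card I then L ! (k - 1) else n)"
    unfolding idx_def L_def using k1 by auto
  show "idx I n (k - 1) < idx I n k"
  proof (cases "k = 1")
    case True
    have "0 < idx I n k"
    proof (cases "k \<le> card I")
      case kT: True
      then have "L ! (k - 1) \<in> I" using nthI k1 by simp
      then show ?thesis using Ige1[OF \<open>L ! (k - 1) \<in> I\<close>] kT unfolding ib by simp
    next
      case kF: False
      then show ?thesis unfolding ib using n by simp
    qed
    then show ?thesis unfolding ia using True by simp
  next
    case False
    then have k2': "k - 2 < card I" using k1 k2 by linarith
    show ?thesis
    proof (cases "k \<le> card I")
      case True
      have "L ! (k - 2) < L ! (k - 1)"
        using sorted_wrt_nth_less[OF sL, of "k - 2" "k - 1"] False k1 True lenL by simp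
      then show ?thesis unfolding ia ib using True False by simp
    next
      case kF: False
      then show ?thesis unfolding ia ib using False nthI[OF k2'] Iltn by simp
    qed
  qed
  show "idx I n k \<in> I \<union> {n}" unfolding ib using nthI k1 by auto
  show "idx I n (k - 1) = 0 \<or> idx I n (k - 1) \<in> I" unfolding ia using nthI k1 k2 by auto
  fix v assume v: "v \<in> I \<union> {n}"
  show "v \<le> idx I n (k - 1) \<or> idx I n k \<le> v"
  proof (cases "v = n")
    case True
    have "idx I n k \<le> n" unfolding ib using nthI Iltn k1 by (auto simp: less_imp_le)
    then show ?thesis using True by simp
  next
    case False
    then have vI: "v \<in> I" using v by simp
    then obtain j where j: "j < card I" "v = L ! j" using setL lenL by (metis in_set_conv_nth)
    show ?thesis
    proof (cases "j < k - 1")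
      case True
      then have "k \<noteq> 1" by simp
      moreover have "L ! j \<le> L ! (k - 2)"
        using sorted_nth_mono[OF sL', of j "k - 2"] True k2 lenL by simp
      ultimately show ?thesis unfolding ia using j by simp
    next
      case False
      then have kc: "k \<le> card I" using j k1 by linarith
      have "L ! (k - 1) \<le> L ! j"
        using sorted_nth_mono[OF sL', of "k - 1" j] False j lenL by simp
      then show ?thesis unfolding ib using kc j by simp
    qed
  qed
qed

theorem lemma4p7:
  fixes n k :: nat and I :: "nat set" and h :: "nat \<Rightarrow> nat"
  assumes "I \<subseteq> {1..<n}"
    and "h \<in> Hmaps I n"
    and "1 \<le> k" and "k \<le> card I + 1"
  shows "csf (I \<union> {idx I n (k - 1) + 1 ..< idx I n k}) n
            (\<lambda>i. if idx I n (k - 1) < i \<and> i \<le> idx I n k then h (idx I n k) else h i) \<alpha>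
         = qfact (idx I n k - idx I n (k - 1)) * csf I n h \<alpha>"
proof (cases "n = 0")
  case True
  then have I0: "I = {}" using assms(1) by auto
  then have k: "k = 1" using assms(3,4) by simp
  have i0: "idx I n 0 = 0" unfolding idx_def by simp
  have i1: "idx I n 1 = 0" unfolding idx_def using I0 True by simp
  have hh: "(\<lambda>i. if idx I n (k - 1) < i \<and> i \<le> idx I n k then h (idx I n k) else h i) = h"
    using i0 i1 k by auto
  have ss: "I \<union> {idx I n (k - 1) + 1 ..< idx I n k} = I" using i0 i1 k by simp
  have qq: "qfact (idx I n k - idx I n (k - 1)) = 1" using i0 i1 k by (simp add: qfact_def)
  show ?thesis unfolding hh ss qq by simp
next
  case False
  then have n1: "1 \<le> n" by simp
  note ip = idx_props[OF assms(1) n1 assms(3) assms(4)]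
  have hV: "\<And>v. v \<in> I \<union> {n} \<Longrightarrow> h v \<in> I \<union> {n}" and hge: "\<And>v. v \<in> I \<union> {n} \<Longrightarrow> v \<le> h v"
    using assms(2) unfolding Hmaps_def by auto
  interpret S: setting I n "idx I n (k - 1)" "idx I n k" h
  proof
    show "I \<subseteq> {1..<n}" by (rule assms(1))
    show "idx I n (k - 1) < idx I n k" by (rule ip(1))
    show "idx I n k \<in> I \<union> {n}" by (rule ip(2))
    show "idx I n (k - 1) = 0 \<or> idx I n (k - 1) \<in> I" by (rule ip(3))
    show "\<And>v. v \<in> I \<union> {n} \<Longrightarrow> v \<le> idx I n (k - 1) \<or> idx I n k \<le> v" by (rule ip(4))
    show "\<And>v. v \<in> I \<union> {n} \<Longrightarrow> h v \<in> I \<union> {n}" by (rule hV)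
    show "idx I n k \<le> h (idx I n k)" by (rule hge[OF ip(2)])
  qed
  show ?thesis using S.main[of \<alpha>] unfolding S.I'_def S.h'_def .
qed



end
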